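(* Let $M$ be a loopless matroid on $E=\{0,\dots,n\}$. The Bergman classes $\{\Delta_{M'} : M' \text{ a loopless relative nested quotient of } M\}$ are linearly independent in $\operatorname{MW}_\bullet(\Sigma_{A_n})$.
   Context: $\Sigma_{A_n}$ is the braid fan in $\mathbb R^E/\mathbb R\mathbf e_E$, with cones $\operatorname{Cone}(u_{S_1},\dots,u_{S_k})$ for chains of subsets $\emptyset\subsetneq S_1\subsetneq\cdots\subsetneq S_k\subsetneq E$, where $u_S$ is the image of $\sum_{i\in S}\mathbf e_i$; $\operatorname{MW}_\ell(\Sigma_{A_n})$ is the space of $\ell$-dimensional Minkowski weights (balanced real functions on $\ell$-dimensional cones) and $\operatorname{MW}_\bullet=\bigoplus_\ell\operatorname{MW}_\ell$. For a loopless matroid $M'$ of rank $r'$, $\Delta_{M'}\in\operatorname{MW}_{r'-1}(\Sigma_{A_n})$ equals $1$ on cones $\operatorname{Cone}(u_{F_1},\dots,u_{F_{r'-1}})$ with all $F_i$ flats of $M'$ and $0$ otherwise. $M'$ is a quotient of $M$ ($f:M'\twoheadleftarrow M$) if every flat of $M'$ is a flat of $M$; $n_f(A)=\operatorname{rk}_M(A)-\operatorname{rk}_{M'}(A)$; an $f$-cyclic flat is a flat $F$ of $M'$ minimal under inclusion among flats of $M'$ of the same $f$-nullity; $M'$ is a relative nested quotient if its $f$-cyclic flats form a chain. *)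

theory Defs
  imports Complex_Main
begin

definition matroid_on :: "nat set \<Rightarrow> nat set set \<Rightarrow> bool" where
  "matroid_on E I \<longleftrightarrow> finite E \<and> I \<subseteq> Pow E \<and> {} \<in> I
     \<and> (\<forall>X\<in>I. \<forall>Y. Y \<subseteq> X \<longrightarrow> Y \<in> I)
     \<and> (\<forall>X\<in>I. \<forall>Y\<in>I. card X < card Y \<longrightarrow> (\<exists>y\<in>Y - X. insert y X \<in> I))"

definition mrank :: "nat set set \<Rightarrow> nat set \<Rightarrow> nat" where
  "mrank I A = Max (card ` {X \<in> I. X \<subseteq> A})"

definition loopless :: "nat set \<Rightarrow> nat set set \<Rightarrow> bool" where
  "loopless E I \<longleftrightarrow> (\<forall>x\<in>E. {x} \<in> I)"

definition matroid_rank :: "nat set \<Rightarrow> nat set set \<Rightarrow> nat" where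
  "matroid_rank E I = mrank I E"

definition flat :: "nat set \<Rightarrow> nat set set \<Rightarrow> nat set \<Rightarrow> bool" where
  "flat E I F \<longleftrightarrow> F \<subseteq> E \<and> (\<forall>x\<in>E - F. mrank I (insert x F) \<noteq> mrank I F)"

definition is_quotient :: "nat set \<Rightarrow> nat set set \<Rightarrow> nat set set \<Rightarrow> bool" where
  "is_quotient E I' I \<longleftrightarrow> matroid_on E I' \<and> matroid_on E I
     \<and> (\<forall>F. flat E I' F \<longrightarrow> flat E I F)"

definition nullity :: "nat set set \<Rightarrow> nat set set \<Rightarrow> nat set \<Rightarrow> int" where
  "nullity I' I A = int (mrank I A) - int (mrank I' A)"

definition f_cyclic_flat :: "nat set \<Rightarrow> nat set set \<Rightarrow> nat set set \<Rightarrow> nat set \<Rightarrow> bool" where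
  "f_cyclic_flat E I' I F \<longleftrightarrow> flat E I' F \<and>
     (\<forall>G. flat E I' G \<and> G \<subset> F \<longrightarrow> nullity I' I G \<noteq> nullity I' I F)"

definition relative_nested_quotient :: "nat set \<Rightarrow> nat set set \<Rightarrow> nat set set \<Rightarrow> bool" where
  "relative_nested_quotient E I' I \<longleftrightarrow> is_quotient E I' I \<and>
     (\<forall>F G. f_cyclic_flat E I' I F \<and> f_cyclic_flat E I' I G \<longrightarrow> F \<subseteq> G \<or> G \<subseteq> F)"

text \<open>Cones of the braid fan: Cone(u_S1,...,u_Sk) for a chain of proper nonempty subsets
  of E; the cone is identified with its chain (a set of subsets), its dimension is the
  cardinality of the chain.\<close>
definition braid_cone :: "nat set \<Rightarrow> nat set set \<Rightarrow> bool" where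
  "braid_cone E C \<longleftrightarrow> (\<forall>S\<in>C. {} \<subset> S \<and> S \<subset> E) \<and> (\<forall>S\<in>C. \<forall>T\<in>C. S \<subseteq> T \<or> T \<subseteq> S)"

text \<open>Bergman class Delta_{M'} as a (graded) weight on cones of the braid fan:
  1 on (r'-1)-dimensional cones whose rays are all flats of M', 0 otherwise.\<close>
definition bergman_class :: "nat set \<Rightarrow> nat set set \<Rightarrow> nat set set \<Rightarrow> real" where
  "bergman_class E I' C = (if braid_cone E C \<and> card C = matroid_rank E I' - 1
       \<and> (\<forall>F\<in>C. flat E I' F) then 1 else 0)"

end

theory Submission
  imports Defs
begin

lemma m_fin: "matroid_on E I \<Longrightarrow> finite I"
  unfolding matroid_on_def by (meson finite_Pow_iff finite_subset)

lemma m_sub: "matroid_on E I \<Longrightarrow> X \<in> I \<Longrightarrow> X \<subseteq> E"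
  unfolding matroid_on_def by blast

lemma m_finX: "matroid_on E I \<Longrightarrow> X \<in> I \<Longrightarrow> finite X"
  unfolding matroid_on_def by (meson PowD finite_subset subsetD)

lemma m_empty: "matroid_on E I \<Longrightarrow> {} \<in> I"
  unfolding matroid_on_def by blast

lemma m_down: "matroid_on E I \<Longrightarrow> X \<in> I \<Longrightarrow> Y \<subseteq> X \<Longrightarrow> Y \<in> I"
  unfolding matroid_on_def by blast

lemma m_aug: "matroid_on E I \<Longrightarrow> X \<in> I \<Longrightarrow> Y \<in> I \<Longrightarrow> card X < card Y \<Longrightarrow> \<exists>y\<in>Y - X. insert y X \<in> I"
  unfolding matroid_on_def by blast

lemma rk_ge: assumes "matroid_on E I" "Y \<in> I" "Y \<subseteq> A" shows "card Y \<le> mrank I A"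
  unfolding mrank_def
  apply (rule Max_ge)
  using m_fin[OF assms(1)] assms by auto

lemma rk_obtain: assumes "matroid_on E I" obtains Y where "Y \<in> I" "Y \<subseteq> A" "card Y = mrank I A"
proof -
  have "mrank I A \<in> card ` {X \<in> I. X \<subseteq> A}"
    unfolding mrank_def
    apply (rule Max_in)
    using m_fin[OF assms(1)] m_empty[OF assms(1)] by auto
  then show ?thesis using that by auto
qed

lemma rk_mono: assumes "matroid_on E I" "A \<subseteq> B" shows "mrank I A \<le> mrank I B"
proof -
  obtain Y where "Y \<in> I" "Y \<subseteq> A" "card Y = mrank I A" using rk_obtain[OF assms(1)] by metis
  then show ?thesis using rk_ge[OF assms(1), of Y B] assms(2) by auto
qed

lemma rk_ins: assumes "matroid_on E I" shows "mrank I (insert x A) \<le> mrank I A + 1"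
proof -
  obtain Y where Y: "Y \<in> I" "Y \<subseteq> insert x A" "card Y = mrank I (insert x A)" using rk_obtain[OF assms(1)] by metis
  have "Y - {x} \<in> I" using m_down[OF assms Y(1)] by auto
  then have "card (Y - {x}) \<le> mrank I A" using rk_ge[OF assms, of "Y - {x}" A] Y(2) by auto
  moreover have "card Y \<le> card (Y - {x}) + 1" using m_finX[OF assms Y(1)]
    by (cases "x \<in> Y") (auto simp: card_Diff_singleton_if)
  ultimately show ?thesis using Y by linarith
qed

lemma rk_empty: assumes "matroid_on E I" shows "mrank I {} = 0"
proof -
  obtain Y where "Y \<in> I" "Y \<subseteq> {}" "card Y = mrank I {}" using rk_obtain[OF assms] by metis
  then show ?thesis by auto
qed

lemma rk_indep: assumes "matroid_on E I" "X \<in> I" shows "mrank I X = card X"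
proof -
  obtain Y where Y: "Y \<in> I" "Y \<subseteq> X" "card Y = mrank I X" using rk_obtain[OF assms(1)] by metis
  have "card Y \<le> card X" using Y(2) m_finX[OF assms] card_mono by blast
  then show ?thesis using rk_ge[OF assms(1) assms(2) order_refl] Y by linarith
qed

lemma rk_determines: assumes "matroid_on E I1" "matroid_on E I2" "\<forall>A\<subseteq>E. mrank I1 A = mrank I2 A"
  shows "I1 = I2"
proof -
  have *: "X \<in> J2" if M1: "matroid_on E J1" and M2: "matroid_on E J2" and eq: "\<forall>A\<subseteq>E. mrank J1 A = mrank J2 A"
     and X: "X \<in> J1" for J1 J2 X
  proof -
    have XE: "X \<subseteq> E" using m_sub[OF M1 X] .
    have "mrank J2 X = card X" using rk_indep[OF M1 X] eq XE by auto
    then obtain Y where Y: "Y \<in> J2" "Y \<subseteq> X" "card Y = card X" using rk_obtain[OF M2] by metis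
    have "Y = X" using card_subset_eq[OF m_finX[OF M1 X] Y(2) Y(3)] .
    then show ?thesis using Y by auto
  qed
  show ?thesis using *[OF assms(1,2,3)] *[OF assms(2,1)] assms(3) by auto
qed

lemma rk_extend: assumes M: "matroid_on E I" and J: "J \<in> I" "J \<subseteq> A"
  obtains B where "B \<in> I" "J \<subseteq> B" "B \<subseteq> A" "card B = mrank I A"
proof -
  let ?K = "{B \<in> I. J \<subseteq> B \<and> B \<subseteq> A}"
  have fK: "finite ?K" using m_fin[OF M] by auto
  have "J \<in> ?K" using J by auto
  then have "card ` ?K \<noteq> {}" by auto
  then have "Max (card ` ?K) \<in> card ` ?K" using fK by (intro Max_in) auto
  then obtain B where B: "B \<in> ?K" "card B = Max (card ` ?K)" by auto
  have Bmax: "card B' \<le> card B" if "B' \<in> ?K" for B' using B(2) fK that by (simp add: Max_ge)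
  have le: "card B \<le> mrank I A" using rk_ge[OF M, of B A] B by auto
  have "\<not> card B < mrank I A"
  proof
    assume lt: "card B < mrank I A"
    obtain Y where Y: "Y \<in> I" "Y \<subseteq> A" "card Y = mrank I A" using rk_obtain[OF M] by metis
    obtain y where y: "y \<in> Y - B" "insert y B \<in> I" using m_aug[OF M, of B Y] B Y lt by auto
    have "insert y B \<in> ?K" using y B Y by auto
    moreover have "card (insert y B) = card B + 1" using y m_finX[OF M, of B] B by auto
    ultimately show False using Bmax by fastforce
  qed
  then show ?thesis using that B le by auto
qed


lemma rk_ins_same: assumes M: "matroid_on E I" and XG: "X \<subseteq> G" and eq: "mrank I (insert e X) = mrank I X"
  shows "mrank I (insert e G) = mrank I G"
proof (rule ccontr)
  assume ne: "mrank I (insert e G) \<noteq> mrank I G"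
  have gt: "mrank I (insert e G) > mrank I G" using ne rk_mono[OF M, of G "insert e G"] by force
  obtain BX where BX: "BX \<in> I" "BX \<subseteq> X" "card BX = mrank I X" using rk_obtain[OF M] by metis
  obtain BG where BG: "BG \<in> I" "BX \<subseteq> BG" "BG \<subseteq> G" "card BG = mrank I G"
    using rk_extend[OF M BX(1), of G] BX XG by auto
  obtain B' where B': "B' \<in> I" "B' \<subseteq> insert e G" "card B' = mrank I (insert e G)" using rk_obtain[OF M] by metis
  obtain y where y: "y \<in> B' - BG" "insert y BG \<in> I" using m_aug[OF M BG(1) B'(1)] gt BG B' by auto
  have fBG: "finite BG" using m_finX[OF M BG(1)] .
  show False
  proof (cases "y = e")
    case False
    then have "insert y BG \<subseteq> G" using y B' BG by auto
    then have "card (insert y BG) \<le> mrank I G" using rk_ge[OF M y(2)] by auto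
    then show False using y fBG BG by auto
  next
    case True
    have "insert e BX \<in> I" using m_down[OF M y(2), of "insert e BX"] True BG by auto
    then have "card (insert e BX) \<le> mrank I (insert e X)" using rk_ge[OF M, of "insert e BX" "insert e X"] BX by auto
    moreover have "e \<notin> BX" using y True BG by auto
    moreover have "finite BX" using m_finX[OF M BX(1)] .
    ultimately show False using eq BX by auto
  qed
qed

lemma rk_union_same: assumes M: "matroid_on E I" and fS: "finite S" and all: "\<forall>e\<in>S. mrank I (insert e X) = mrank I X"
  shows "mrank I (X \<union> S) = mrank I X"
  using fS all
proof (induction S rule: finite_induct)
  case empty then show ?case by simp
next
  case (insert e S)
  have "mrank I (insert e (X \<union> S)) = mrank I (X \<union> S)"
    using rk_ins_same[OF M, of X "X \<union> S" e] insert by auto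
  then show ?case using insert by auto
qed

definition cl :: "nat set \<Rightarrow> nat set set \<Rightarrow> nat set \<Rightarrow> nat set" where
  "cl E I X = {e \<in> E. mrank I (insert e X) = mrank I X}"

lemma cl_sup: "X \<subseteq> E \<Longrightarrow> X \<subseteq> cl E I X"
  unfolding cl_def by (auto simp: insert_absorb)

lemma cl_rk: assumes M: "matroid_on E I" and X: "X \<subseteq> E" shows "mrank I (cl E I X) = mrank I X"
proof -
  have fE: "finite E" using M unfolding matroid_on_def by auto
  have "cl E I X = X \<union> cl E I X" using cl_sup[OF X] by auto
  also have "mrank I \<dots> = mrank I X"
    by (rule rk_union_same[OF M]) (use fE in \<open>auto simp: cl_def\<close>)
  finally show ?thesis .
qed

lemma cl_flat: assumes M: "matroid_on E I" and X: "X \<subseteq> E" shows "flat E I (cl E I X)"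
  unfolding flat_def
proof safe
  show "x \<in> E" if "x \<in> cl E I X" for x using that unfolding cl_def by auto
next
  fix x assume x: "x \<in> E" "x \<notin> cl E I X" and eq: "mrank I (insert x (cl E I X)) = mrank I (cl E I X)"
  have ne: "mrank I (insert x X) \<noteq> mrank I X" using x unfolding cl_def by auto
  have "mrank I (insert x X) \<le> mrank I (insert x (cl E I X))" using rk_mono[OF M] cl_sup[OF X] by (meson insert_mono)
  moreover have "mrank I X \<le> mrank I (insert x X)" using rk_mono[OF M] by (meson subset_insertI)
  ultimately show False using ne eq cl_rk[OF M X] by linarith
qed

lemma flat_closed: assumes M: "matroid_on E I" and G: "flat E I G" and XG: "X \<subseteq> G" and e: "e \<in> E"
  and eq: "mrank I (insert e X) = mrank I X" shows "e \<in> G"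
  using rk_ins_same[OF M XG eq] G e unfolding flat_def by auto

lemma cl_least: assumes M: "matroid_on E I" and G: "flat E I G" and XG: "X \<subseteq> G" shows "cl E I X \<subseteq> G"
  using flat_closed[OF M G XG] unfolding cl_def by auto

lemma flat_E: "flat E I E" unfolding flat_def by auto

lemma flat_empty: assumes M: "matroid_on E I" and L: "loopless E I" shows "flat E I {}"
  unfolding flat_def using L rk_indep[OF M] rk_empty[OF M] unfolding loopless_def by auto

lemma rk_pos: assumes M: "matroid_on E I" and L: "loopless E I" and F: "F \<subseteq> E" "F \<noteq> {}"
  shows "mrank I F \<ge> 1"
proof -
  obtain x where x: "x \<in> F" using F by auto
  have "mrank I {x} = 1" using rk_indep[OF M] L x F unfolding loopless_def by auto
  then show ?thesis using rk_mono[OF M, of "{x}" F] x by auto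
qed

lemma flat_ins: assumes M: "matroid_on E I" and F: "flat E I F" and e: "e \<in> E" "e \<notin> F"
  shows "mrank I (insert e F) = mrank I F + 1"
  using F e rk_ins[OF M, of e F] rk_mono[OF M, of F "insert e F"] unfolding flat_def by force

lemma flat_strict: assumes M: "matroid_on E I" and F: "flat E I F" and G: "flat E I G" and FG: "F \<subset> G"
  shows "mrank I F < mrank I G"
proof -
  obtain e where e: "e \<in> G" "e \<notin> F" using FG by auto
  have "e \<in> E" using G e unfolding flat_def by auto
  then have "mrank I (insert e F) = mrank I F + 1" using flat_ins[OF M F] e by auto
  moreover have "mrank I (insert e F) \<le> mrank I G" using rk_mono[OF M] e FG by auto
  ultimately show ?thesis by auto
qed

lemma flat_proper: assumes M: "matroid_on E I" and F: "flat E I F" and FE: "F \<noteq> E"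
  shows "mrank I F < mrank I E"
  using flat_strict[OF M F flat_E] F FE unfolding flat_def by auto


lemma quot_step: assumes Q: "is_quotient E I2 I" and a: "a \<subseteq> E" and e: "e \<in> E"
  shows "mrank I2 (insert e a) + mrank I a \<le> mrank I2 a + mrank I (insert e a)"
proof -
  have M2: "matroid_on E I2" and M: "matroid_on E I" using Q unfolding is_quotient_def by auto
  have r1: "mrank I a \<le> mrank I (insert e a)" "mrank I (insert e a) \<le> mrank I a + 1"
    using rk_mono[OF M, of a "insert e a"] rk_ins[OF M] by auto
  have r2: "mrank I2 (insert e a) \<le> mrank I2 a + 1" using rk_ins[OF M2] by auto
  show ?thesis
  proof (cases "mrank I (insert e a) = mrank I a")
    case True
    have fl: "flat E I (cl E I2 a)" using Q cl_flat[OF M2 a] unfolding is_quotient_def by auto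
    have "e \<in> cl E I2 a" using flat_closed[OF M fl cl_sup[OF a] e] True by (simp add: rk_ins_same[OF M cl_sup[OF a]])
    then have "insert e a \<subseteq> cl E I2 a" using cl_sup[OF a] by auto
    then have "mrank I2 (insert e a) \<le> mrank I2 a" using rk_mono[OF M2] cl_rk[OF M2 a] by metis
    then show ?thesis using True by linarith
  next
    case False
    then show ?thesis using r1 r2 by linarith
  qed
qed

lemma quot_mono_aux: assumes Q: "is_quotient E I2 I" and X: "X \<subseteq> E" and fS: "finite S" and S: "S \<subseteq> E"
  shows "mrank I2 (X \<union> S) + mrank I X \<le> mrank I2 X + mrank I (X \<union> S)"
  using fS S
proof (induction S rule: finite_induct)
  case empty then show ?case by simp
next
  case (insert e S)
  have "mrank I2 (insert e (X \<union> S)) + mrank I (X \<union> S) \<le> mrank I2 (X \<union> S) + mrank I (insert e (X \<union> S))"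
    using quot_step[OF Q, of "X \<union> S" e] insert X by auto
  then show ?case using insert by auto
qed

lemma quot_mono: assumes Q: "is_quotient E I2 I" and XY: "X \<subseteq> Y" and Y: "Y \<subseteq> E"
  shows "mrank I2 Y + mrank I X \<le> mrank I2 X + mrank I Y"
proof -
  have fE: "finite E" using Q unfolding is_quotient_def matroid_on_def by auto
  have "X \<union> Y = Y" using XY by auto
  moreover have "finite Y" using Y fE finite_subset by auto
  ultimately show ?thesis using quot_mono_aux[OF Q, of X Y] XY Y by simp
qed

definition pchain :: "nat set \<Rightarrow> nat set set \<Rightarrow> nat set set \<Rightarrow> bool" where
  "pchain E I C \<longleftrightarrow> (\<forall>F\<in>C. flat E I F \<and> F \<noteq> {} \<and> F \<noteq> E) \<and> (\<forall>S\<in>C. \<forall>T\<in>C. S \<subseteq> T \<or> T \<subseteq> S)"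

lemma pchain_fin: assumes M: "matroid_on E I" and P: "pchain E I C" shows "finite C"
proof -
  have "C \<subseteq> Pow E" using P unfolding pchain_def flat_def by auto
  moreover have "finite E" using M unfolding matroid_on_def by auto
  ultimately show ?thesis by (meson finite_Pow_iff finite_subset)
qed

lemma pchain_inj: assumes M: "matroid_on E I" and P: "pchain E I C" shows "inj_on (mrank I) C"
proof (rule inj_onI)
  fix F G assume FG: "F \<in> C" "G \<in> C" "mrank I F = mrank I G"
  show "F = G"
  proof (rule ccontr)
    assume "F \<noteq> G"
    then have "F \<subset> G \<or> G \<subset> F" using P FG unfolding pchain_def by blast
    moreover have "flat E I F" "flat E I G" using P FG unfolding pchain_def by auto
    ultimately show False using flat_strict[OF M, of F G] flat_strict[OF M, of G F] FG(3) by auto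
  qed
qed

lemma pchain_rk: assumes M: "matroid_on E I" and L: "loopless E I" and P: "pchain E I C" and F: "F \<in> C"
  shows "1 \<le> mrank I F" "mrank I F \<le> mrank I E - 1"
proof -
  have "flat E I F" "F \<noteq> {}" "F \<noteq> E" using P F unfolding pchain_def by auto
  moreover then have "F \<subseteq> E" unfolding flat_def by auto
  ultimately show "1 \<le> mrank I F" "mrank I F \<le> mrank I E - 1"
    using rk_pos[OF M L, of F] flat_proper[OF M, of F] by auto
qed

lemma pchain_card: assumes M: "matroid_on E I" and L: "loopless E I" and P: "pchain E I C"
  shows "card C \<le> mrank I E - 1"
proof -
  have "card C = card (mrank I ` C)" using card_image[OF pchain_inj[OF M P]] by simp
  also have "\<dots> \<le> card {1..mrank I E - 1}"
    by (rule card_mono) (use pchain_rk[OF M L P] in auto)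
  finally show ?thesis by simp
qed

lemma pchain_count: assumes M: "matroid_on E I" and L: "loopless E I" and P: "pchain E I C"
  and cC: "card C = mrank I E - 1" and F: "F \<in> C"
  shows "mrank I F = card {G \<in> C. G \<subseteq> F}"
proof -
  let ?L = "{G \<in> C. G \<subseteq> F}" and ?U = "{G \<in> C. \<not> G \<subseteq> F}"
  have fC: "finite C" using pchain_fin[OF M P] .
  have inj: "inj_on (mrank I) C" using pchain_inj[OF M P] .
  have "card ?L = card (mrank I ` ?L)" using card_image[OF inj_on_subset[OF inj, of ?L]] by auto
  also have "\<dots> \<le> card {1..mrank I F}"
    by (rule card_mono) (use pchain_rk[OF M L P] rk_mono[OF M] in auto)
  finally have cL: "card ?L \<le> mrank I F" by simp
  have up: "mrank I F < mrank I G" if "G \<in> ?U" for G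
  proof -
    have "F \<subset> G" using that P F unfolding pchain_def by auto
    then show ?thesis using flat_strict[OF M] P F that unfolding pchain_def by auto
  qed
  have "card ?U = card (mrank I ` ?U)" using card_image[OF inj_on_subset[OF inj, of ?U]] by auto
  also have "\<dots> \<le> card {mrank I F + 1..mrank I E - 1}"
    by (rule card_mono) (use pchain_rk[OF M L P] up in fastforce)+
  finally have cU: "card ?U \<le> mrank I E - 1 - mrank I F" by simp
  have CU: "C = ?L \<union> ?U" by auto
  have "card C = card ?L + card ?U"
    by (subst CU, rule card_Un_disjoint) (use fC in auto)
  then show ?thesis using cL cU cC pchain_rk[OF M L P F] by linarith
qed


lemma chain_max: assumes "finite A" "A \<noteq> {}" "\<forall>S\<in>A. \<forall>T\<in>A. S \<subseteq> T \<or> T \<subseteq> S"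
  shows "\<exists>m\<in>A. \<forall>x\<in>A. x \<subseteq> m"
  using assms
proof (induction A rule: finite_ne_induct)
  case (singleton x) then show ?case by auto
next
  case (insert x F)
  have ch: "\<forall>S\<in>insert x F. \<forall>T\<in>insert x F. S \<subseteq> T \<or> T \<subseteq> S" using insert.prems by simp
  have "\<forall>S\<in>F. \<forall>T\<in>F. S \<subseteq> T \<or> T \<subseteq> S" using ch by (intro ballI) (rule bspec[OF bspec[OF ch]], auto)
  then obtain m where m: "m \<in> F" "\<forall>y\<in>F. y \<subseteq> m" using insert.IH by blast
  have "x \<subseteq> m \<or> m \<subseteq> x" using bspec[OF bspec[OF ch insertI1] insertI2[OF m(1)]] .
  then show ?case
  proof
    assume "x \<subseteq> m" then show ?case using m by (intro bexI[of _ m]) auto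
  next
    assume "m \<subseteq> x" then show ?case using m by (intro bexI[of _ x]) auto
  qed
qed

lemma chain_min: assumes "finite A" "A \<noteq> {}" "\<forall>S\<in>A. \<forall>T\<in>A. S \<subseteq> T \<or> T \<subseteq> S"
  shows "\<exists>m\<in>A. \<forall>x\<in>A. m \<subseteq> x"
  using assms
proof (induction A rule: finite_ne_induct)
  case (singleton x) then show ?case by auto
next
  case (insert x F)
  have ch: "\<forall>S\<in>insert x F. \<forall>T\<in>insert x F. S \<subseteq> T \<or> T \<subseteq> S" using insert.prems by simp
  have "\<forall>S\<in>F. \<forall>T\<in>F. S \<subseteq> T \<or> T \<subseteq> S" using ch by (intro ballI) (rule bspec[OF bspec[OF ch]], auto)
  then obtain m where m: "m \<in> F" "\<forall>y\<in>F. m \<subseteq> y" using insert.IH by blast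
  have "x \<subseteq> m \<or> m \<subseteq> x" using bspec[OF bspec[OF ch insertI1] insertI2[OF m(1)]] .
  then show ?case
  proof
    assume "x \<subseteq> m" then show ?case using m by (intro bexI[of _ x]) auto
  next
    assume "m \<subseteq> x" then show ?case using m by (intro bexI[of _ m]) auto
  qed
qed

lemma pchain_step: assumes M: "matroid_on E I" and L: "loopless E I" and P: "pchain E I C"
  and lt: "card C < mrank I E - 1"
  shows "\<exists>H. H \<notin> C \<and> pchain E I (insert H C)"
proof -
  have fC: "finite C" using pchain_fin[OF M P] .
  have lt2: "card (mrank I ` C) < card {1..mrank I E - 1}" using card_image_le[OF fC, of "mrank I"] lt by auto
  have "\<not> {1..mrank I E - 1} \<subseteq> mrank I ` C"
  proof
    assume sub: "{1..mrank I E - 1} \<subseteq> mrank I ` C"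
    show False using card_mono[OF finite_imageI[OF fC] sub] lt2 by linarith
  qed
  then obtain k where k: "k \<in> {1..mrank I E - 1}" "k \<notin> mrank I ` C" by blast
  have flC: "\<And>X. X \<in> C \<Longrightarrow> flat E I X" using P unfolding pchain_def by auto
  have chC: "\<And>X Y. X \<in> C \<Longrightarrow> Y \<in> C \<Longrightarrow> X \<subseteq> Y \<or> Y \<subseteq> X" using P unfolding pchain_def by auto
  obtain F where F: "flat E I F" "mrank I F < k" "\<forall>X\<in>C. mrank I X < k \<longrightarrow> X \<subseteq> F" "F = {} \<or> F \<in> C"
  proof (cases "{X\<in>C. mrank I X < k} = {}")
    case True
    then show ?thesis using that[of "{}"] flat_empty[OF M L] rk_empty[OF M] k by auto
  next
    case False
    then obtain m where "m \<in> {X\<in>C. mrank I X < k}" "\<forall>x\<in>{X\<in>C. mrank I X < k}. x \<subseteq> m"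
      using chain_max[of "{X\<in>C. mrank I X < k}"] fC chC by auto
    then show ?thesis using that[of m] flC by auto
  qed
  obtain G where G: "flat E I G" "mrank I G > k" "\<forall>X\<in>C. mrank I X > k \<longrightarrow> G \<subseteq> X" "G = E \<or> G \<in> C"
  proof (cases "{X\<in>C. mrank I X > k} = {}")
    case True
    then show ?thesis using that[of "E"] flat_E k by auto
  next
    case False
    then obtain m where "m \<in> {X\<in>C. mrank I X > k}" "\<forall>x\<in>{X\<in>C. mrank I X > k}. m \<subseteq> x"
      using chain_min[of "{X\<in>C. mrank I X > k}"] fC chC by auto
    then show ?thesis using that[of m] flC by auto
  qed
  have GE: "G \<subseteq> E" using G unfolding flat_def by auto
  have FE0: "F \<subseteq> E" using F unfolding flat_def by auto
  have FG: "F \<subseteq> G"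
  proof -
    have "F \<subseteq> G \<or> G \<subseteq> F"
    proof (cases "F = {} \<or> G = E")
      case True then show ?thesis using GE FE0 by auto
    next
      case False then show ?thesis using F(4) G(4) chC by auto
    qed
    moreover have "\<not> G \<subseteq> F" using rk_mono[OF M, of G F] F G by auto
    ultimately show ?thesis by auto
  qed
  have "F \<noteq> G" using F G by auto
  then obtain e where e: "e \<in> G" "e \<notin> F" using FG by auto
  have eE: "e \<in> E" using e GE by auto
  have FE: "F \<subseteq> E" using F unfolding flat_def by auto
  define H where "H = cl E I (insert e F)"
  have ieF: "insert e F \<subseteq> E" using eE FE by auto
  have Hfl: "flat E I H" unfolding H_def using cl_flat[OF M ieF] .
  have Hrk: "mrank I H = mrank I F + 1" unfolding H_def using cl_rk[OF M ieF] flat_ins[OF M F(1) eE e(2)] by simp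
  have Hsup: "insert e F \<subseteq> H" unfolding H_def using cl_sup[OF ieF] .
  have HG: "H \<subseteq> G" unfolding H_def using cl_least[OF M G(1)] e FG by auto
  have HneG: "H \<noteq> G" using Hrk F G by auto
  have cmp: "X \<subseteq> H \<or> H \<subseteq> X" if "X \<in> C" for X
  proof -
    have "mrank I X \<noteq> k" using k that by auto
    then have "mrank I X < k \<or> mrank I X > k" by auto
    then show ?thesis
    proof
      assume "mrank I X < k" then have "X \<subseteq> F" using F(3) that by auto
      then show ?thesis using Hsup by auto
    next
      assume "mrank I X > k" then have "G \<subseteq> X" using G(3) that by auto
      then show ?thesis using HG by auto
    qed
  qed
  have HnC: "H \<notin> C"
  proof
    assume "H \<in> C"
    then have "mrank I H \<noteq> k" using k by auto
    then have "mrank I H < k \<or> mrank I H > k" by auto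
    then show False
    proof
      assume "mrank I H < k" then have "H \<subseteq> F" using F(3) \<open>H \<in> C\<close> by auto
      then show False using Hsup e by auto
    next
      assume "mrank I H > k" then have "G \<subseteq> H" using G(3) \<open>H \<in> C\<close> by auto
      then show False using HG HneG by auto
    qed
  qed
  have p1: "\<forall>X\<in>insert H C. flat E I X \<and> X \<noteq> {} \<and> X \<noteq> E"
    using P Hfl Hsup HG HneG GE unfolding pchain_def by auto
  have p2: "\<forall>S\<in>insert H C. \<forall>T\<in>insert H C. S \<subseteq> T \<or> T \<subseteq> S"
  proof (intro ballI)
    fix S T assume "S \<in> insert H C" "T \<in> insert H C"
    then show "S \<subseteq> T \<or> T \<subseteq> S" using chC cmp by auto
  qed
  have "pchain E I (insert H C)" unfolding pchain_def using p1 p2 by blast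
  then show ?thesis using HnC by auto
qed

lemma pchain_extend: assumes M: "matroid_on E I" and L: "loopless E I" and P: "pchain E I C"
  shows "\<exists>C'. C \<subseteq> C' \<and> pchain E I C' \<and> card C' = mrank I E - 1"
  using P
proof (induction "mrank I E - 1 - card C" arbitrary: C rule: less_induct)
  case less
  show ?case
  proof (cases "card C < mrank I E - 1")
    case True
    then obtain H where H: "H \<notin> C" "pchain E I (insert H C)" using pchain_step[OF M L less.prems] by auto
    have "card (insert H C) = card C + 1" using H pchain_fin[OF M less.prems] by auto
    then obtain C' where "insert H C \<subseteq> C'" "pchain E I C'" "card C' = mrank I E - 1"
      using less.hyps[OF _ H(2)] True by fastforce
    then show ?thesis by auto
  next
    case False
    then show ?thesis using pchain_card[OF M L less.prems] less.prems by auto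
  qed
qed


lemma key_flag: assumes M0: "matroid_on E I0" and L0: "loopless E I0" and R: "relative_nested_quotient E I0 I"
  obtains C where "pchain E I0 C" "card C = mrank I0 E - 1"
    "\<forall>Z. f_cyclic_flat E I0 I Z \<and> Z \<noteq> {} \<and> Z \<noteq> E \<longrightarrow> Z \<in> C"
proof -
  let ?C0 = "{Z. f_cyclic_flat E I0 I Z \<and> Z \<noteq> {} \<and> Z \<noteq> E}"
  have ch: "\<forall>F G. f_cyclic_flat E I0 I F \<and> f_cyclic_flat E I0 I G \<longrightarrow> F \<subseteq> G \<or> G \<subseteq> F"
    using R unfolding relative_nested_quotient_def by auto
  have fl: "\<And>Z. f_cyclic_flat E I0 I Z \<Longrightarrow> flat E I0 Z" unfolding f_cyclic_flat_def by auto
  have p1: "\<forall>F\<in>?C0. flat E I0 F \<and> F \<noteq> {} \<and> F \<noteq> E" using fl by auto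
  have p2: "\<forall>S\<in>?C0. \<forall>T\<in>?C0. S \<subseteq> T \<or> T \<subseteq> S"
  proof (intro ballI)
    fix S T assume S: "S \<in> ?C0" and T: "T \<in> ?C0"
    then have "f_cyclic_flat E I0 I S" "f_cyclic_flat E I0 I T" by auto
    then show "S \<subseteq> T \<or> T \<subseteq> S" using ch by blast
  qed
  have pc: "pchain E I0 ?C0" unfolding pchain_def using p1 p2 by blast
  obtain C where C: "?C0 \<subseteq> C" "pchain E I0 C" "card C = mrank I0 E - 1"
    using pchain_extend[OF M0 L0 pc] by blast
  have "\<forall>Z. f_cyclic_flat E I0 I Z \<and> Z \<noteq> {} \<and> Z \<noteq> E \<longrightarrow> Z \<in> C" using C(1) by blast
  then show ?thesis using that[OF C(2,3)] by blast
qed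

lemma compare:
  assumes M: "matroid_on E I" and M0: "matroid_on E I0" and L0: "loopless E I0"
    and Q2: "is_quotient E I2 I" and L2: "loopless E I2" and En: "E \<noteq> {}"
    and P0: "pchain E I0 C" and c0: "card C = mrank I0 E - 1"
    and cyc: "\<forall>Z. f_cyclic_flat E I0 I Z \<and> Z \<noteq> {} \<and> Z \<noteq> E \<longrightarrow> Z \<in> C"
    and fl2: "\<forall>F\<in>C. flat E I2 F" and c2: "card C = mrank I2 E - 1"
  shows "\<forall>A. A \<subseteq> E \<longrightarrow> mrank I2 A \<le> mrank I0 A"
proof (intro allI impI)
  fix A assume AE: "A \<subseteq> E"
  have M2: "matroid_on E I2" using Q2 unfolding is_quotient_def by auto
  have P2: "pchain E I2 C" using P0 fl2 unfolding pchain_def by auto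
  have fE: "finite E" using M unfolding matroid_on_def by auto
  have "mrank I0 E \<ge> 1" "mrank I2 E \<ge> 1" using rk_pos[OF M0 L0 _ En] rk_pos[OF M2 L2 _ En] by auto
  then have rE: "mrank I2 E = mrank I0 E" using c0 c2 by linarith
  have eqC: "mrank I2 F = mrank I0 F" if "F \<in> C" for F
    using pchain_count[OF M0 L0 P0 c0 that] pchain_count[OF M2 L2 P2 c2 that] by simp
  define F where "F = cl E I0 A"
  have Ffl: "flat E I0 F" unfolding F_def using cl_flat[OF M0 AE] .
  have FE: "F \<subseteq> E" using Ffl unfolding flat_def by auto
  have AF: "A \<subseteq> F" unfolding F_def using cl_sup[OF AE] .
  have rF: "mrank I0 F = mrank I0 A" unfolding F_def using cl_rk[OF M0 AE] .
  let ?FS = "{G. flat E I0 G \<and> G \<subseteq> F \<and> nullity I0 I G = nullity I0 I F}"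
  have sub: "?FS \<subseteq> Pow F" by blast
  have "finite F" using finite_subset[OF FE fE] .
  then have fin: "finite ?FS" using finite_subset[OF sub] by blast
  have "F \<in> ?FS" using Ffl by auto
  then have ne: "?FS \<noteq> {}" by blast
  obtain Z where Z: "Z \<in> ?FS" "\<forall>b\<in>?FS. b \<le> Z \<longrightarrow> Z = b"
    using finite_has_minimal[OF fin ne] by (elim bexE)
  have Zcyc: "f_cyclic_flat E I0 I Z"
    unfolding f_cyclic_flat_def
  proof (intro conjI allI impI)
    show "flat E I0 Z" using Z by auto
  next
    fix G assume G: "flat E I0 G \<and> G \<subset> Z"
    show "nullity I0 I G \<noteq> nullity I0 I Z"
    proof
      assume "nullity I0 I G = nullity I0 I Z"
      then have "G \<in> ?FS" using G Z by auto
      then have "Z = G" using Z(2) G by auto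
      then show False using G by auto
    qed
  qed
  have ZF: "Z \<subseteq> F" using Z by auto
  have rZ: "mrank I2 Z = mrank I0 Z"
  proof (cases "Z = {} \<or> Z = E")
    case True then show ?thesis using rk_empty[OF M0] rk_empty[OF M2] rE by auto
  next
    case False then have "Z \<in> C" using cyc Zcyc by blast
    then show ?thesis using eqC by blast
  qed
  have qm: "mrank I2 F + mrank I Z \<le> mrank I2 Z + mrank I F" using quot_mono[OF Q2 ZF FE] .
  have nl: "int (mrank I Z) - int (mrank I0 Z) = int (mrank I F) - int (mrank I0 F)"
    using Z unfolding nullity_def by auto
  have "mrank I2 A \<le> mrank I2 F" using rk_mono[OF M2 AF] .
  then show "mrank I2 A \<le> mrank I0 A" using qm nl rZ rF by linarith
qed


theorem proposition3p25:
  fixes n :: nat and I :: "nat set set" and c :: "nat set set \<Rightarrow> real"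
  defines "E \<equiv> {0..n}"
  defines "RNQ \<equiv> {I'. loopless E I' \<and> relative_nested_quotient E I' I}"
  assumes "matroid_on E I" and "loopless E I"
  assumes "\<forall>C. (\<Sum>I'\<in>RNQ. c I' * bergman_class E I' C) = 0"
  shows "\<forall>I'\<in>RNQ. c I' = 0"
proof (rule ccontr)
  assume "\<not> (\<forall>I'\<in>RNQ. c I' = 0)"
  then obtain I1 where I1: "I1 \<in> RNQ" "c I1 \<noteq> 0" by auto
  have M: "matroid_on E I" using assms(3) .
  have fE: "finite E" and En: "E \<noteq> {}" unfolding E_def by auto
  have RNQ_M: "matroid_on E J" "loopless E J" "relative_nested_quotient E J I" "is_quotient E J I"
    if "J \<in> RNQ" for J
    using that unfolding RNQ_def relative_nested_quotient_def is_quotient_def by auto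
  have finR: "finite RNQ"
  proof -
    have "RNQ \<subseteq> Pow (Pow E)" using RNQ_M(1) unfolding matroid_on_def by blast
    then show ?thesis using fE by (meson finite_Pow_iff finite_subset)
  qed
  define S where "S J = (\<Sum>A\<in>Pow E. mrank J A)" for J
  obtain I0 where I0: "I0 \<in> RNQ" "c I0 \<noteq> 0" and least: "\<And>J. J \<in> RNQ \<Longrightarrow> c J \<noteq> 0 \<Longrightarrow> S I0 \<le> S J"
    using ex_has_least_nat[of "\<lambda>J. J \<in> RNQ \<and> c J \<noteq> 0" I1 S] I1 by blast
  have M0: "matroid_on E I0" and L0: "loopless E I0" and R0: "relative_nested_quotient E I0 I"
    using RNQ_M[OF I0(1)] by auto
  obtain C where P0: "pchain E I0 C" and c0: "card C = mrank I0 E - 1"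
    and cyc: "\<forall>Z. f_cyclic_flat E I0 I Z \<and> Z \<noteq> {} \<and> Z \<noteq> E \<longrightarrow> Z \<in> C"
    using key_flag[OF M0 L0 R0] by blast
  have bc_cone: "braid_cone E C"
    using P0 unfolding pchain_def braid_cone_def flat_def by blast
  have bc0: "bergman_class E I0 C = 1"
    using bc_cone c0 P0 unfolding bergman_class_def matroid_rank_def pchain_def by auto
  have others: "c J * bergman_class E J C = 0" if J: "J \<in> RNQ - {I0}" for J
  proof (cases "c J = 0")
    case True then show ?thesis by simp
  next
    case False
    show ?thesis
    proof (rule ccontr)
      assume "c J * bergman_class E J C \<noteq> 0"
      then have "bergman_class E J C \<noteq> 0" by auto
      then have cJ: "card C = mrank J E - 1" and flJ: "\<forall>F\<in>C. flat E J F"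
        unfolding bergman_class_def matroid_rank_def by (auto split: if_splits)
      have MJ: "matroid_on E J" "loopless E J" "is_quotient E J I" using RNQ_M J by auto
      have le: "\<forall>A. A \<subseteq> E \<longrightarrow> mrank J A \<le> mrank I0 A"
        using compare[OF M M0 L0 MJ(3) MJ(2) En P0 c0 cyc flJ cJ] .
      have "J \<noteq> I0" using J by auto
      then have "\<not> (\<forall>A\<subseteq>E. mrank J A = mrank I0 A)" using rk_determines[OF MJ(1) M0] by blast
      then obtain A where A: "A \<subseteq> E" "mrank J A \<noteq> mrank I0 A" by blast
      have "S J < S I0" unfolding S_def
      proof (rule sum_strict_mono_ex1)
        show "finite (Pow E)" using fE by simp
        show "\<forall>x\<in>Pow E. mrank J x \<le> mrank I0 x" using le by auto
        show "\<exists>a\<in>Pow E. mrank J a < mrank I0 a" using A le by (intro bexI[of _ A]) auto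
      qed
      then show False using least[of J] J False by auto
    qed
  qed
  have z: "(\<Sum>I'\<in>RNQ - {I0}. c I' * bergman_class E I' C) = 0"
    by (rule sum.neutral) (use others in blast)
  have "(\<Sum>I'\<in>RNQ. c I' * bergman_class E I' C) = c I0 * bergman_class E I0 C + (\<Sum>I'\<in>RNQ - {I0}. c I' * bergman_class E I' C)"
    using sum.remove[OF finR I0(1)] by blast
  also have "\<dots> = c I0" using z bc0 by simp
  finally show False using assms(5) I0(2) by auto
qed

end
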